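(* Let $k\in\mathbb N$, $E\subseteq W(A)$ and $\vec s\in V^\infty(A)$ such that $E$ is $k$-large in $\vec s$. Let $r\ge2$ and $E=\bigcup_{i=1}^r E_i$. Then there exist $1\le i\le r$ and $\vec t\in V^\infty(A)$ with $\vec t\le_k\vec s$ such that $E_i$ is $k$-large in $\vec t$.
   Context: $\mathbb N=\{0,1,2,\dots\}$. Fix an increasing sequence $A_0\subseteq A_1\subseteq A_2\subseteq\cdots$ of finite nonempty alphabets and set $A=\bigcup_{n\in\mathbb N}A_n$. $W(A)$ denotes the set of all finite words over $A$, including the empty word; words are concatenated by juxtaposition. Fix a symbol $x\notin A$. A variable word over $A$ is a finite word over $A\cup\{x\}$ in which $x$ occurs at least once; $V(A)$ is the set of variable words. For $s(x)\in V(A)$ and $a\in A\cup\{x\}$, $s(a)$ is obtained by replacing every occurrence of $x$ by $a$. $V^\infty(A)$ is the set of infinite sequences of variable words. For a sequence $(s_n(x))_{n\in I}$ of variable words and a sequence $(B_n)_{n\in I}$ of finite subsets of $A$, both indexed by a set $I\subseteq\mathbb N$ that is either a finite interval or of the form $\{m,m+1,\dots\}$: the constant span $\langle (s_n(x))_{n\in I}\,\|\,(B_n)_{n\in I}\rangle_c$ is the set of all words $s_{l_0}(a_0)s_{l_1}(a_1)\cdots s_{l_j}(a_j)$ with $j\ge0$, $l_0<\dots<l_j$ in $I$ and $a_i\in B_{l_i}$ for each $i$; the variable span $\langle (s_n(x))_{n\in I}\,\|\,(B_n)_{n\in I}\rangle_v$ is the set of all words $s_{l_0}(a_0)\cdots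 s_{l_j}(a_j)$ with $j\ge0$, $l_0<\dots<l_j$ in $I$, $a_i\in B_{l_i}\cup\{x\}$ for each $i$, and at least one $a_i=x$. (E.g. $(A_{k+n})_{n=p}^{q}$ denotes the sequence $B_n=A_{k+n}$, $p\le n\le q$.) Extracted $k$-subsequences: let $k\in\mathbb N$ and $\vec s=(s_n(x))_{n=0}^\infty\in V^\infty(A)$. A finite sequence $(t_n(x))_{n=0}^l$ of variable words is an extracted $k$-subsequence of $\vec s$ if there exist integers $0=m_0<m_1<\dots<m_{l+1}$ with $t_i(x)\in\langle (s_n(x))_{n=m_i}^{m_{i+1}-1}\,\|\,(A_{k+n})_{n=m_i}^{m_{i+1}-1}\rangle_v$ for all $0\le i\le l$. An infinite sequence $\vec t=(t_n(x))_{n=0}^\infty$ is an extracted $k$-subsequence of $\vec s$ if each initial segment $(t_n(x))_{n=0}^l$ is a finite extracted $k$-subsequence of $\vec s$. We write $\vec t\le_k\vec s$. A set $E\subseteq W(A)$ is $k$-large in $\vec s\in V^\infty(A)$ if $E\cap\langle\vec w\,\|\,(A_{k+n})_{n=0}^\infty\rangle_c\neq\emptyset$ for every $\vec w\in V^\infty(A)$ with $\vec w\le_k\vec s$. *)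

theory Defs
  imports Main
begin

text \<open>Letters are elements of type 'a; the alphabets are given by Alph :: nat => 'a set,
  with A = union of all Alph n. Variable words are lists over 'a option, where None plays
  the role of the variable symbol x (so x is automatically not in A).\<close>

definition alph_union :: "(nat \<Rightarrow> 'a set) \<Rightarrow> 'a set" where
  "alph_union Alph = (\<Union>n. Alph n)"

definition words :: "(nat \<Rightarrow> 'a set) \<Rightarrow> 'a list set" where
  "words Alph = {w. set w \<subseteq> alph_union Alph}"

definition var_words :: "(nat \<Rightarrow> 'a set) \<Rightarrow> 'a option list set" where
  "var_words Alph = {s. None \<in> set s \<and> (\<forall>b. Some b \<in> set s \<longrightarrow> b \<in> alph_union Alph)}"

definition var_seqs :: "(nat \<Rightarrow> 'a set) \<Rightarrow> (nat \<Rightarrow> 'a option list) set" where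
  "var_seqs Alph = {s. \<forall>n. s n \<in> var_words Alph}"

definition subst :: "'a option list \<Rightarrow> 'a \<Rightarrow> 'a list" where
  "subst s a = map (\<lambda>c. case c of None \<Rightarrow> a | Some b \<Rightarrow> b) s"

definition vsubst :: "'a option list \<Rightarrow> 'a option \<Rightarrow> 'a option list" where
  "vsubst s a = map (\<lambda>c. case c of None \<Rightarrow> a | Some b \<Rightarrow> Some b) s"

definition cspan :: "nat set \<Rightarrow> (nat \<Rightarrow> 'a option list) \<Rightarrow> (nat \<Rightarrow> 'a set) \<Rightarrow> 'a list set" where
  "cspan I s B = {concat (map2 (\<lambda>l a. subst (s l) a) ls as) | ls as.
      ls \<noteq> [] \<and> sorted_wrt (<) ls \<and> set ls \<subseteq> I \<and> length as = length ls \<and>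
      (\<forall>i<length ls. as ! i \<in> B (ls ! i))}"

definition vspan :: "nat set \<Rightarrow> (nat \<Rightarrow> 'a option list) \<Rightarrow> (nat \<Rightarrow> 'a set) \<Rightarrow> 'a option list set" where
  "vspan I s B = {concat (map2 (\<lambda>l a. vsubst (s l) a) ls as) | ls as.
      ls \<noteq> [] \<and> sorted_wrt (<) ls \<and> set ls \<subseteq> I \<and> length as = length ls \<and>
      (\<forall>i<length ls. as ! i \<in> Some ` B (ls ! i) \<union> {None}) \<and> None \<in> set as}"

text \<open>t \<le>_k s: t is an extracted k-subsequence of s (every initial segment is a finite
  extracted k-subsequence).\<close>
definition extracted :: "(nat \<Rightarrow> 'a set) \<Rightarrow> nat \<Rightarrow> (nat \<Rightarrow> 'a option list) \<Rightarrow> (nat \<Rightarrow> 'a option list) \<Rightarrow> bool" where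
  "extracted Alph k t s \<longleftrightarrow>
     (\<forall>l. \<exists>m :: nat \<Rightarrow> nat. m 0 = 0 \<and> (\<forall>i\<le>l. m i < m (Suc i)) \<and>
        (\<forall>i\<le>l. t i \<in> vspan {m i..<m (Suc i)} s (\<lambda>n. Alph (k + n))))"

definition k_large :: "(nat \<Rightarrow> 'a set) \<Rightarrow> nat \<Rightarrow> 'a list set \<Rightarrow> (nat \<Rightarrow> 'a option list) \<Rightarrow> bool" where
  "k_large Alph k E s \<longleftrightarrow>
     (\<forall>w \<in> var_seqs Alph. extracted Alph k w s \<longrightarrow> E \<inter> cspan UNIV w (\<lambda>n. Alph (k + n)) \<noteq> {})"

end

theory Submission
  imports Defs
begin

definition sb :: "'a option \<Rightarrow> 'a option \<Rightarrow> 'a option" where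
  "sb b a = (case a of None \<Rightarrow> b | Some c \<Rightarrow> Some c)"

definition EV :: "(nat \<Rightarrow> 'a option list) \<Rightarrow> (nat \<times> 'a option) list \<Rightarrow> 'a option list" where
  "EV s ps = concat (map (\<lambda>(l,a). vsubst (s l) a) ps)"

definition good :: "(nat \<Rightarrow> 'a set) \<Rightarrow> nat set \<Rightarrow> (nat \<times> 'a option) list \<Rightarrow> bool" where
  "good B I ps \<longleftrightarrow> sorted_wrt (<) (map fst ps) \<and> fst ` set ps \<subseteq> I \<and>
     (\<forall>(l,a)\<in>set ps. a \<in> Some ` B l \<union> {None})"

definition CP :: "(nat \<Rightarrow> (nat \<times> 'a option) list) \<Rightarrow> (nat \<times> 'a option) list \<Rightarrow> (nat \<times> 'a option) list" where
  "CP qs ps = concat (map (\<lambda>(n,a). map (\<lambda>(p,a'). (p, sb a a')) (qs n)) ps)"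

lemma vsubst_sb: "vsubst x a = map (sb a) x"
  unfolding vsubst_def sb_def by simp

lemma vsubst_None: "vsubst x None = x"
  unfolding vsubst_def by (induct x) (auto split: option.splits)

lemma vsubst_vsubst: "vsubst (vsubst x a') a = vsubst x (sb a a')"
  unfolding vsubst_sb by (induct x) (auto simp: sb_def split: option.splits)

lemma vsubst_append: "vsubst (x @ y) a = vsubst x a @ vsubst y a"
  by (simp add: vsubst_def)

lemma vsubst_EV: "vsubst (EV s q) a = EV s (map (\<lambda>(p,a'). (p, sb a a')) q)"
  by (induct q) (auto simp: EV_def vsubst_vsubst vsubst_append, simp add: vsubst_def)

lemma EV_comp:
  assumes "\<forall>(n,a)\<in>set ps. w n = EV s (qs n)"
  shows "EV w ps = EV s (CP qs ps)"
  using assms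
proof (induct ps)
  case Nil
  then show ?case by (simp add: EV_def CP_def)
next
  case (Cons p ps)
  obtain n a where p: "p = (n,a)" by force
  have "EV w (p # ps) = vsubst (w n) a @ EV w ps" by (simp add: EV_def p)
  also have "\<dots> = EV s (map (\<lambda>(p,a'). (p, sb a a')) (qs n)) @ EV s (CP qs ps)"
    using Cons by (simp add: p vsubst_EV)
  also have "\<dots> = EV s (CP qs (p # ps))" by (simp add: EV_def CP_def p)
  finally show ?case .
qed

lemma set_CP: "(p,b) \<in> set (CP qs ps) \<longleftrightarrow> (\<exists>n a a'. (n,a) \<in> set ps \<and> (p,a') \<in> set (qs n) \<and> b = sb a a')"
proof
  assume "(p,b) \<in> set (CP qs ps)"
  then show "\<exists>n a a'. (n,a) \<in> set ps \<and> (p,a') \<in> set (qs n) \<and> b = sb a a'"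
    by (auto simp: CP_def)
next
  assume "\<exists>n a a'. (n,a) \<in> set ps \<and> (p,a') \<in> set (qs n) \<and> b = sb a a'"
  then obtain n a a' where h: "(n,a) \<in> set ps" "(p,a') \<in> set (qs n)" "b = sb a a'" by blast
  have "(p,b) \<in> set (map (\<lambda>(p,a'). (p, sb a a')) (qs n))" using h(2,3) by force
  then have "(p,b) \<in> set ((\<lambda>(n,a). map (\<lambda>(p,a'). (p, sb a a')) (qs n)) (n,a))" by simp
  then show "(p,b) \<in> set (CP qs ps)" unfolding CP_def set_concat set_map using h(1) by blast
qed

lemma vspan_iff:
  "x \<in> vspan I s B \<longleftrightarrow> (\<exists>ps. x = EV s ps \<and> good B I ps \<and> (\<exists>l. (l,None) \<in> set ps))"
proof
  assume "x \<in> vspan I s B"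
  then obtain ls as where x: "x = concat (map2 (\<lambda>l a. vsubst (s l) a) ls as)"
    and h: "ls \<noteq> []" "sorted_wrt (<) ls" "set ls \<subseteq> I" "length as = length ls"
      "\<forall>i<length ls. as ! i \<in> Some ` B (ls ! i) \<union> {None}" "None \<in> set as"
    unfolding vspan_def by blast
  define ps where "ps = zip ls as"
  have 1: "x = EV s ps" unfolding x EV_def ps_def by simp
  have mf: "map fst ps = ls" using h(4) by (simp add: ps_def)
  have 3: "\<forall>(l,a)\<in>set ps. a \<in> Some ` B l \<union> {None}"
  proof
    fix p assume "p \<in> set ps"
    then obtain i where i: "i < length ps" "p = ps ! i" by (metis in_set_conv_nth)
    then have "p = (ls ! i, as ! i)" "i < length ls" using h(4) by (auto simp: ps_def)
    then show "case p of (l,a) \<Rightarrow> a \<in> Some ` B l \<union> {None}" using h(5) by simp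
  qed
  have 4: "\<exists>l. (l,None) \<in> set ps"
  proof -
    obtain i where i: "i < length as" "as ! i = None" using h(6) by (metis in_set_conv_nth)
    then have "ps ! i = (ls ! i, None)" "i < length ps" using h(4) by (auto simp: ps_def)
    then have "(ls ! i, None) \<in> set ps" by (metis nth_mem)
    then show ?thesis by blast
  qed
  have "good B I ps" unfolding good_def
  proof (intro conjI)
    show "sorted_wrt (<) (map fst ps)" using mf h(2) by simp
    show "fst ` set ps \<subseteq> I" using mf h(3) by (metis list.set_map)
  qed (use 3 in simp)
  then show "\<exists>ps. x = EV s ps \<and> good B I ps \<and> (\<exists>l. (l,None) \<in> set ps)"
    using 1 4 by blast
next
  assume "\<exists>ps. x = EV s ps \<and> good B I ps \<and> (\<exists>l. (l,None) \<in> set ps)"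
  then obtain ps l where x: "x = EV s ps" and g: "good B I ps" and l: "(l,None) \<in> set ps" by blast
  have 1: "x = concat (map2 (\<lambda>l a. vsubst (s l) a) (map fst ps) (map snd ps))"
    unfolding x EV_def zip_map_fst_snd ..
  have 2: "map fst ps \<noteq> []" using l by auto
  have 3: "\<forall>i<length (map fst ps). map snd ps ! i \<in> Some ` B (map fst ps ! i) \<union> {None}"
  proof (intro allI impI)
    fix i assume i: "i < length (map fst ps)"
    then have "ps ! i \<in> set ps" by simp
    moreover have "ps ! i = (map fst ps ! i, map snd ps ! i)" using i by simp
    ultimately show "map snd ps ! i \<in> Some ` B (map fst ps ! i) \<union> {None}"
      using g unfolding good_def by (metis (no_types, lifting) case_prodD)
  qed
  have 4: "None \<in> set (map snd ps)" using l by (metis list.set_map image_eqI snd_conv)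
  have 5: "sorted_wrt (<) (map fst ps)" "set (map fst ps) \<subseteq> I" using g unfolding good_def by auto
  have 6: "length (map snd ps) = length (map fst ps)" by simp
  show "x \<in> vspan I s B" unfolding vspan_def
    using 1 2 3 4 5 6 by blast
qed

lemma subst_vsubst: "subst x a = map the (vsubst x (Some a))"
  unfolding subst_def vsubst_def by (induct x) (auto split: option.splits)

lemma cspan_fwd:
  "length as = length ls \<Longrightarrow> concat (map2 (\<lambda>l a. subst (s l) a) ls as) = map the (EV s (zip ls (map Some as)))"
  by (induct ls arbitrary: as) (auto simp: EV_def subst_vsubst length_Suc_conv)

lemma cspan_bwd:
  "\<forall>(l,a)\<in>set ps. a \<noteq> None \<Longrightarrow> map the (EV s ps) = concat (map2 (\<lambda>l a. subst (s l) a) (map fst ps) (map (the \<circ> snd) ps))"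
  by (induct ps) (auto simp: EV_def subst_vsubst)

lemma cspan_iff:
  "x \<in> cspan I s B \<longleftrightarrow> (\<exists>ps. x = map the (EV s ps) \<and> good B I ps \<and> ps \<noteq> [] \<and> (\<forall>(l,a)\<in>set ps. a \<noteq> None))"
proof
  assume "x \<in> cspan I s B"
  then obtain ls as where x: "x = concat (map2 (\<lambda>l a. subst (s l) a) ls as)"
    and h: "ls \<noteq> []" "sorted_wrt (<) ls" "set ls \<subseteq> I" "length as = length ls"
      "\<forall>i<length ls. as ! i \<in> B (ls ! i)"
    unfolding cspan_def by blast
  define ps where "ps = zip ls (map Some as)"
  have 1: "x = map the (EV s ps)" unfolding x ps_def using h(4) by (rule cspan_fwd)
  have mf: "map fst ps = ls" using h(4) by (simp add: ps_def)
  have 3: "\<forall>(l,a)\<in>set ps. a \<in> Some ` B l \<union> {None} \<and> a \<noteq> None"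
  proof
    fix p assume "p \<in> set ps"
    then obtain i where i: "i < length ps" "p = ps ! i" by (metis in_set_conv_nth)
    then have "p = (ls ! i, Some (as ! i))" "i < length ls" using h(4) by (auto simp: ps_def)
    then show "case p of (l,a) \<Rightarrow> a \<in> Some ` B l \<union> {None} \<and> a \<noteq> None" using h(5) by simp
  qed
  have 4: "ps \<noteq> []" using h(1) mf by auto
  have "good B I ps" unfolding good_def
  proof (intro conjI)
    show "sorted_wrt (<) (map fst ps)" using mf h(2) by simp
    show "fst ` set ps \<subseteq> I" using mf h(3) by (metis list.set_map)
  qed (use 3 in auto)
  moreover have "\<forall>(l,a)\<in>set ps. a \<noteq> None" using 3 by auto
  ultimately show "\<exists>ps. x = map the (EV s ps) \<and> good B I ps \<and> ps \<noteq> [] \<and> (\<forall>(l,a)\<in>set ps. a \<noteq> None)"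
    using 1 4 by blast
next
  assume "\<exists>ps. x = map the (EV s ps) \<and> good B I ps \<and> ps \<noteq> [] \<and> (\<forall>(l,a)\<in>set ps. a \<noteq> None)"
  then obtain ps where x: "x = map the (EV s ps)" and g: "good B I ps" and ne: "ps \<noteq> []"
    and ns: "\<forall>(l,a)\<in>set ps. a \<noteq> None" by blast
  have 1: "x = concat (map2 (\<lambda>l a. subst (s l) a) (map fst ps) (map (the \<circ> snd) ps))"
    unfolding x using ns by (rule cspan_bwd)
  have 3: "\<forall>i<length (map fst ps). map (the \<circ> snd) ps ! i \<in> B (map fst ps ! i)"
  proof (intro allI impI)
    fix i assume i: "i < length (map fst ps)"
    then have m: "ps ! i \<in> set ps" by simp
    obtain l a where p: "ps ! i = (l,a)" by force
    have "a \<in> Some ` B l \<union> {None}" "a \<noteq> None" using g ns m p unfolding good_def by fastforce+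
    then have "the a \<in> B l" by auto
    then show "map (the \<circ> snd) ps ! i \<in> B (map fst ps ! i)" using i p by simp
  qed
  have 2: "map fst ps \<noteq> []" using ne by simp
  have 5: "sorted_wrt (<) (map fst ps)" "set (map fst ps) \<subseteq> I" using g unfolding good_def by auto
  have 6: "length (map (the \<circ> snd) ps) = length (map fst ps)" by simp
  show "x \<in> cspan I s B" unfolding cspan_def
    using 1 2 3 5 6 by blast
qed



lemma step_mono_less:
  assumes "\<forall>i\<le>L. m i < m (Suc i)" "i < j" "j \<le> Suc L"
  shows "m i < (m j :: nat)"
  using assms(2,3)
proof (induct j)
  case 0 then show ?case by simp
next
  case (Suc j)
  then have "m j < m (Suc j)" using assms(1) by simp
  then show ?case using Suc by (cases "i = j") auto
qed

lemma step_mono_le: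
  assumes "\<forall>i\<le>L. m i < m (Suc i)" "i \<le> j" "j \<le> Suc L"
  shows "m i \<le> (m j :: nat)"
  using step_mono_less[OF assms(1)] assms(2,3) by (cases "i = j") (auto simp: less_imp_le)

lemma step_ge:
  assumes "\<forall>i\<le>L. m i < m (Suc i)" "m 0 = 0" "i \<le> Suc L"
  shows "i \<le> (m i :: nat)"
  using assms(3)
proof (induct i)
  case 0 then show ?case by simp
next
  case (Suc i)
  then have "m i < m (Suc i)" using assms(1) by simp
  then show ?case using Suc by simp
qed

lemma sorted_CP:
  assumes "sorted_wrt (<) (map fst ps)"
    and "\<forall>(n,a)\<in>set ps. sorted_wrt (<) (map fst (qs n)) \<and> fst ` set (qs n) \<subseteq> {m n..<m (Suc n)}"
    and "\<forall>(n,a)\<in>set ps. \<forall>(n',a')\<in>set ps. n < n' \<longrightarrow> m (Suc n) \<le> (m n' :: nat)"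
  shows "sorted_wrt (<) (map fst (CP qs ps))"
  using assms
proof (induct ps)
  case Nil then show ?case by (simp add: CP_def)
next
  case (Cons p ps)
  obtain n a where p: "p = (n,a)" by force
  have ih: "sorted_wrt (<) (map fst (CP qs ps))"
  proof (rule Cons.hyps)
    show "sorted_wrt (<) (map fst ps)" using Cons.prems(1) by simp
    show "\<forall>(n,a)\<in>set ps. sorted_wrt (<) (map fst (qs n)) \<and> fst ` set (qs n) \<subseteq> {m n..<m (Suc n)}"
      using Cons.prems(2) by auto
    show "\<forall>(n,a)\<in>set ps. \<forall>(n',a')\<in>set ps. n < n' \<longrightarrow> m (Suc n) \<le> (m n' :: nat)"
      using Cons.prems(3) by auto
  qed
  have eq: "map fst (CP qs (p # ps)) = map fst (qs n) @ map fst (CP qs ps)"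
    by (simp add: CP_def p case_prod_beta comp_def)
  have s1: "sorted_wrt (<) (map fst (qs n))" using Cons.prems(2) p by auto
  have cross: "\<forall>x\<in>set (map fst (qs n)). \<forall>y\<in>set (map fst (CP qs ps)). x < y"
  proof (intro ballI)
    fix x y assume x: "x \<in> set (map fst (qs n))" and y: "y \<in> set (map fst (CP qs ps))"
    obtain b where xb: "(x,b) \<in> set (qs n)" using x by auto
    have "x < m (Suc n)" using xb Cons.prems(2) p by fastforce
    obtain c where yc: "(y,c) \<in> set (CP qs ps)" using y by auto
    then obtain n' a' a'' where h: "(n',a') \<in> set ps" "(y,a'') \<in> set (qs n')"
      unfolding set_CP by blast
    have "n < n'" using Cons.prems(1) h(1) p by force
    then have "m (Suc n) \<le> m n'" using Cons.prems(3) h(1) p by fastforce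
    moreover have "m n' \<le> y" using Cons.prems(2) h by fastforce
    ultimately show "x < y" using \<open>x < m (Suc n)\<close> by simp
  qed
  show ?case unfolding eq sorted_wrt_append using s1 ih cross by blast
qed

lemma good_CP:
  assumes g: "good B I ps"
    and gq: "\<forall>(n,a)\<in>set ps. good B {m n..<m (Suc n)} (qs n)"
    and monoB: "\<And>i j. i \<le> j \<Longrightarrow> B i \<subseteq> B j"
    and ge: "\<forall>(n,a)\<in>set ps. n \<le> m n"
    and sep: "\<forall>(n,a)\<in>set ps. \<forall>(n',a')\<in>set ps. n < n' \<longrightarrow> m (Suc n) \<le> (m n' :: nat)"
    and J: "\<forall>(n,a)\<in>set ps. {m n..<m (Suc n)} \<subseteq> J"
  shows "good B J (CP qs ps)"
  unfolding good_def
proof (intro conjI)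
  show "sorted_wrt (<) (map fst (CP qs ps))"
  proof (rule sorted_CP[where m=m])
    show "sorted_wrt (<) (map fst ps)" using g by (simp add: good_def)
    show "\<forall>(n,a)\<in>set ps. sorted_wrt (<) (map fst (qs n)) \<and> fst ` set (qs n) \<subseteq> {m n..<m (Suc n)}"
    proof clarify
      fix n a assume "(n,a) \<in> set ps"
      then have "good B {m n..<m (Suc n)} (qs n)" using gq by auto
      then show "sorted_wrt (<) (map fst (qs n)) \<and> fst ` set (qs n) \<subseteq> {m n..<m (Suc n)}"
        unfolding good_def by blast
    qed
  qed (rule sep)
  show "fst ` set (CP qs ps) \<subseteq> J"
  proof
    fix y assume "y \<in> fst ` set (CP qs ps)"
    then obtain c where "(y,c) \<in> set (CP qs ps)" by force
    then obtain n a a' where h: "(n,a) \<in> set ps" "(y,a') \<in> set (qs n)"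
      unfolding set_CP by blast
    then have "y \<in> {m n..<m (Suc n)}" using gq unfolding good_def by fastforce
    then show "y \<in> J" using J h(1) by blast
  qed
  show "\<forall>(l,a)\<in>set (CP qs ps). a \<in> Some ` B l \<union> {None}"
  proof (intro ballI, clarify)
    fix y c assume "(y,c) \<in> set (CP qs ps)" "c \<notin> Some ` B y"
    then obtain n a a' where h: "(n,a) \<in> set ps" "(y,a') \<in> set (qs n)" "c = sb a a'"
      unfolding set_CP by blast
    have y: "m n \<le> y" using gq h unfolding good_def by fastforce
    have "n \<le> y" using ge h(1) y by fastforce
    then have Bs: "B n \<subseteq> B y" by (rule monoB)
    have a': "a' \<in> Some ` B y \<union> {None}" using gq h unfolding good_def by fastforce
    have a: "a \<in> Some ` B n \<union> {None}" using g h(1) unfolding good_def by fastforce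
    show "c = None"
    proof (cases a')
      case None
      then have "c = a" using h(3) by (simp add: sb_def)
      then show ?thesis using a Bs \<open>c \<notin> Some ` B y\<close> by blast
    next
      case (Some d)
      then have "c = a'" using h(3) by (simp add: sb_def)
      then show ?thesis using a' \<open>c \<notin> Some ` B y\<close> by blast
    qed
  qed
qed



lemma extracted_refl: "extracted Alph k s s"
  unfolding extracted_def
proof (intro allI)
  fix l
  show "\<exists>m. m 0 = 0 \<and> (\<forall>i\<le>l. m i < m (Suc i)) \<and> (\<forall>i\<le>l. s i \<in> vspan {m i..<m (Suc i)} s (\<lambda>n. Alph (k + n)))"
  proof (rule exI[of _ id], intro conjI)
  show "id 0 = (0::nat)" by simp
  show "\<forall>i\<le>l. id i < id (Suc i)" by simp
  show "\<forall>i\<le>l. s i \<in> vspan {id i..<id (Suc i)} s (\<lambda>n. Alph (k + n))"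
  proof (intro allI impI)
    fix i
    have "s i = EV s [(i, None)]" by (simp add: EV_def vsubst_None)
    moreover have "good (\<lambda>n. Alph (k + n)) {id i..<id (Suc i)} [(i, None)]" by (simp add: good_def)
    ultimately show "s i \<in> vspan {id i..<id (Suc i)} s (\<lambda>n. Alph (k + n))"
      unfolding vspan_iff by auto
  qed
  qed
qed

lemma extracted_trans:
  assumes tw: "extracted Alph k t w" and ws: "extracted Alph k w s"
    and monoA: "\<And>i j. i \<le> j \<Longrightarrow> Alph i \<subseteq> Alph j"
  shows "extracted Alph k t s"
  unfolding extracted_def
proof
  fix l
  let ?B = "\<lambda>n. Alph (k+n)"
  have monoB: "\<And>i j. i \<le> j \<Longrightarrow> ?B i \<subseteq> ?B j" using monoA by simp
  obtain m where m0: "m 0 = 0" and mi: "\<forall>i\<le>l. m i < m (Suc i)"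
    and mt: "\<forall>i\<le>l. t i \<in> vspan {m i..<m (Suc i)} w ?B"
    using tw unfolding extracted_def by blast
  define L where "L = m (Suc l)"
  obtain m' where m'0: "m' 0 = 0" and m'i: "\<forall>i\<le>L. m' i < m' (Suc i)"
    and m'w: "\<forall>i\<le>L. w i \<in> vspan {m' i..<m' (Suc i)} s ?B"
    using ws unfolding extracted_def by blast
  have "\<forall>n. \<exists>q. n \<le> L \<longrightarrow> (w n = EV s q \<and> good ?B {m' n..<m' (Suc n)} q \<and> (\<exists>l. (l,None) \<in> set q))"
    using m'w unfolding vspan_iff by blast
  then obtain qs where qs: "\<And>n. n \<le> L \<Longrightarrow> w n = EV s (qs n) \<and> good ?B {m' n..<m' (Suc n)} (qs n) \<and> (\<exists>l. (l,None) \<in> set (qs n))"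
    by metis
  show "\<exists>M. M 0 = 0 \<and> (\<forall>i\<le>l. M i < M (Suc i)) \<and> (\<forall>i\<le>l. t i \<in> vspan {M i..<M (Suc i)} s ?B)"
  proof (intro exI[of _ "\<lambda>i. m' (m i)"] conjI allI impI)
    show "m' (m 0) = 0" using m0 m'0 by simp
  next
    fix i assume i: "i \<le> l"
    have mle: "m (Suc i) \<le> L" unfolding L_def using step_mono_le[OF mi, of "Suc i" "Suc l"] i by simp
    have mlt: "m i < m (Suc i)" using mi i by simp
    show "m' (m i) < m' (m (Suc i))" using step_mono_less[OF m'i mlt] mle by simp
  next
    fix i assume i: "i \<le> l"
    have mle: "m (Suc i) \<le> L" unfolding L_def using step_mono_le[OF mi, of "Suc i" "Suc l"] i by simp
    obtain ps where tps: "t i = EV w ps" and gps: "good ?B {m i..<m (Suc i)} ps"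
      and nps: "\<exists>l. (l,None) \<in> set ps"
      using mt i unfolding vspan_iff by blast
    have inr: "\<And>n a. (n,a) \<in> set ps \<Longrightarrow> m i \<le> n \<and> n < m (Suc i)"
      using gps unfolding good_def by force
    have nL: "\<And>n a. (n,a) \<in> set ps \<Longrightarrow> Suc n \<le> L" using inr mle by fastforce
    have te: "t i = EV s (CP qs ps)" unfolding tps
    proof (rule EV_comp, clarify)
      fix n a assume "(n,a) \<in> set ps"
      then show "w n = EV s (qs n)" using qs nL by (meson Suc_leD)
    qed
    have g: "good ?B {m' (m i)..<m' (m (Suc i))} (CP qs ps)"
    proof (rule good_CP[OF gps _ monoB])
      show "\<forall>(n,a)\<in>set ps. good ?B {m' n..<m' (Suc n)} (qs n)"
      proof clarify
        fix n a assume "(n,a) \<in> set ps"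
        then show "good ?B {m' n..<m' (Suc n)} (qs n)" using qs nL by (meson Suc_leD)
      qed
      show "\<forall>(n,a)\<in>set ps. n \<le> m' n"
      proof clarify
        fix n a assume "(n,a) \<in> set ps"
        then show "n \<le> m' n" using step_ge[OF m'i m'0, of n] nL by fastforce
      qed
      show "\<forall>(n,a)\<in>set ps. \<forall>(n',a')\<in>set ps. n < n' \<longrightarrow> m' (Suc n) \<le> m' n'"
      proof clarify
        fix n a n' a' assume "(n,a) \<in> set ps" "(n',a') \<in> set ps" "n < n'"
        then show "m' (Suc n) \<le> m' n'" using step_mono_le[OF m'i, of "Suc n" n'] nL[of n' a'] by simp
      qed
      show "\<forall>(n,a)\<in>set ps. {m' n..<m' (Suc n)} \<subseteq> {m' (m i)..<m' (m (Suc i))}"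
      proof -
        have "{m' n..<m' (Suc n)} \<subseteq> {m' (m i)..<m' (m (Suc i))}" if na: "(n,a) \<in> set ps" for n a
        proof
        fix y assume "y \<in> {m' n..<m' (Suc n)}"
        then have y: "m' n \<le> y" "y < m' (Suc n)" by auto
        have "m' (m i) \<le> m' n" using step_mono_le[OF m'i, of "m i" n] inr[OF na] nL[OF na] by simp
        moreover have "m' (Suc n) \<le> m' (m (Suc i))"
          using step_mono_le[OF m'i, of "Suc n" "m (Suc i)"] inr[OF na] mle by simp
        ultimately show "y \<in> {m' (m i)..<m' (m (Suc i))}" using y by simp
        qed
        then show ?thesis by auto
      qed
    qed
    obtain n0 where n0: "(n0,None) \<in> set ps" using nps by blast
    obtain p0 where p0: "(p0,None) \<in> set (qs n0)" using qs nL[OF n0] by (meson Suc_leD)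
    have sN: "(None::'a option) = sb None None" by (simp add: sb_def)
    have "(p0, None) \<in> set (CP qs ps)" unfolding set_CP using n0 p0 sN by blast
    then show "t i \<in> vspan {m' (m i)..<m' (m (Suc i))} s ?B"
      unfolding vspan_iff using te g by blast
  qed
qed

lemma cspan_sub:
  assumes tw: "extracted Alph k t w"
    and monoA: "\<And>i j. i \<le> j \<Longrightarrow> Alph i \<subseteq> Alph j"
  shows "cspan UNIV t (\<lambda>n. Alph (k+n)) \<subseteq> cspan UNIV w (\<lambda>n. Alph (k+n))"
proof
  let ?B = "\<lambda>n. Alph (k+n)"
  have monoB: "\<And>i j. i \<le> j \<Longrightarrow> ?B i \<subseteq> ?B j" using monoA by simp
  fix x assume "x \<in> cspan UNIV t ?B"
  then obtain ps where x: "x = map the (EV t ps)" and gps: "good ?B UNIV ps" and ne: "ps \<noteq> []"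
    and ns: "\<forall>(l,a)\<in>set ps. a \<noteq> None" unfolding cspan_iff by blast
  define L where "L = Max (fst ` set ps)"
  have nL: "\<And>n a. (n,a) \<in> set ps \<Longrightarrow> n \<le> L"
    unfolding L_def by (metis Max_ge finite_imageI finite_set fst_conv image_eqI)
  obtain m where m0: "m 0 = 0" and mi: "\<forall>i\<le>L. m i < m (Suc i)"
    and mt: "\<forall>i\<le>L. t i \<in> vspan {m i..<m (Suc i)} w ?B"
    using tw unfolding extracted_def by blast
  have "\<forall>n. \<exists>q. n \<le> L \<longrightarrow> (t n = EV w q \<and> good ?B {m n..<m (Suc n)} q \<and> (\<exists>l. (l,None) \<in> set q))"
    using mt unfolding vspan_iff by blast
  then obtain qs where qs: "\<And>n. n \<le> L \<Longrightarrow> t n = EV w (qs n) \<and> good ?B {m n..<m (Suc n)} (qs n) \<and> (\<exists>l. (l,None) \<in> set (qs n))"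
    by metis
  have te: "EV t ps = EV w (CP qs ps)"
  proof (rule EV_comp, clarify)
    fix n a assume "(n,a) \<in> set ps"
    then show "t n = EV w (qs n)" using qs nL by blast
  qed
  have g: "good ?B UNIV (CP qs ps)"
  proof (rule good_CP[OF gps _ monoB])
    show "\<forall>(n,a)\<in>set ps. good ?B {m n..<m (Suc n)} (qs n)"
    proof clarify
      fix n a assume "(n,a) \<in> set ps"
      then show "good ?B {m n..<m (Suc n)} (qs n)" using qs nL by blast
    qed
    show "\<forall>(n,a)\<in>set ps. n \<le> m n"
    proof clarify
      fix n a assume "(n,a) \<in> set ps"
      then show "n \<le> m n" using step_ge[OF mi m0, of n] nL by fastforce
    qed
    show "\<forall>(n,a)\<in>set ps. \<forall>(n',a')\<in>set ps. n < n' \<longrightarrow> m (Suc n) \<le> m n'"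
    proof clarify
      fix n a n' a' assume "(n,a) \<in> set ps" "(n',a') \<in> set ps" "n < n'"
      then show "m (Suc n) \<le> m n'" using step_mono_le[OF mi, of "Suc n" n'] nL[of n' a'] by simp
    qed
  qed auto
  obtain n0 a0 where n0: "(n0,a0) \<in> set ps" using ne by (metis list.set_intros(1) neq_Nil_conv surj_pair)
  obtain p0 where p0: "(p0,None) \<in> set (qs n0)" using qs nL[OF n0] by blast
  have "(p0, sb a0 None) \<in> set (CP qs ps)" unfolding set_CP using n0 p0 by blast
  then have ne2: "CP qs ps \<noteq> []" by auto
  have ns2: "\<forall>(l,a)\<in>set (CP qs ps). a \<noteq> None"
  proof -
    have "c \<noteq> None" if yc: "(y,c) \<in> set (CP qs ps)" for y c
    proof -
      obtain n a a' where h: "(n,a) \<in> set ps" "c = sb a a'" using yc unfolding set_CP by blast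
      have "a \<noteq> None" using ns h(1) by auto
      then show "c \<noteq> None" using h(2) by (auto simp: sb_def split: option.splits)
    qed
    then show ?thesis by auto
  qed
  show "x \<in> cspan UNIV w ?B" unfolding cspan_iff x te using g ne2 ns2 by blast
qed

theorem fact3p5:
  fixes Alph :: "nat \<Rightarrow> 'a set"
    and k :: nat and E :: "'a list set" and s :: "nat \<Rightarrow> 'a option list"
    and r :: nat and Es :: "nat \<Rightarrow> 'a list set"
  assumes mono_alph: "\<And>n. Alph n \<subseteq> Alph (Suc n)"
    and fin_alph: "\<And>n. finite (Alph n)"
    and ne_alph: "\<And>n. Alph n \<noteq> {}"
    and E_words: "E \<subseteq> words Alph"
    and s_seq: "s \<in> var_seqs Alph"
    and large: "k_large Alph k E s"
    and r2: "r \<ge> 2"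
    and E_union: "E = (\<Union>i\<in>{1..r}. Es i)"
  shows "\<exists>i\<in>{1..r}. \<exists>t \<in> var_seqs Alph. extracted Alph k t s \<and> k_large Alph k (Es i) t"
proof -
  let ?B = "\<lambda>n. Alph (k+n)"
  have monoA: "\<And>i j. i \<le> j \<Longrightarrow> Alph i \<subseteq> Alph j"
    using mono_alph by (rule lift_Suc_mono_le)
  let ?G = "\<exists>i\<in>{1..r}. \<exists>t \<in> var_seqs Alph. extracted Alph k t s \<and> k_large Alph k (Es i) t"
  have claim: "j \<le> r \<Longrightarrow> ?G \<or> (\<exists>w\<in>var_seqs Alph. extracted Alph k w s \<and> (\<forall>i\<in>{1..j}. Es i \<inter> cspan UNIV w ?B = {}))"
    for j
  proof (induct j)
    case 0
    then show ?case using s_seq extracted_refl[of Alph k s] by auto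
  next
    case (Suc j)
    show ?case
    proof (cases ?G)
      case False
      then obtain w where w: "w \<in> var_seqs Alph" "extracted Alph k w s"
        and dis: "\<forall>i\<in>{1..j}. Es i \<inter> cspan UNIV w ?B = {}"
        using Suc by auto
      show ?thesis
      proof (cases "k_large Alph k (Es (Suc j)) w")
        case True
        then have ?G using Suc.prems w by auto
        then show ?thesis by blast
      next
        case nl: False
        then obtain w' where w': "w' \<in> var_seqs Alph" "extracted Alph k w' w"
          and d': "Es (Suc j) \<inter> cspan UNIV w' ?B = {}"
          unfolding k_large_def by blast
        have ws: "extracted Alph k w' s" using extracted_trans[OF w'(2) w(2) monoA] .
        have sub: "cspan UNIV w' ?B \<subseteq> cspan UNIV w ?B" using cspan_sub[OF w'(2) monoA] .
        have "\<forall>i\<in>{1..Suc j}. Es i \<inter> cspan UNIV w' ?B = {}"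
        proof
          fix i assume "i \<in> {1..Suc j}"
          then consider "i \<in> {1..j}" | "i = Suc j" by force
          then show "Es i \<inter> cspan UNIV w' ?B = {}"
          proof cases
            case 1 then show ?thesis using dis sub by blast
          next
            case 2 then show ?thesis using d' by simp
          qed
        qed
        then show ?thesis using w' ws by blast
      qed
    qed simp
  qed
  show ?thesis
  proof (rule ccontr)
    assume nG: "\<not> ?G"
    then obtain w where w: "w \<in> var_seqs Alph" "extracted Alph k w s"
      and dis: "\<forall>i\<in>{1..r}. Es i \<inter> cspan UNIV w ?B = {}"
      using claim[of r] by auto
    have "E \<inter> cspan UNIV w ?B \<noteq> {}" using large w unfolding k_large_def by blast
    then show False using dis E_union by blast
  qed
qed

end
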